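(* Let $X$ be a metric directed multigraph whose strongly connected components all have different total lengths, and let $(X_n,n\in\mathbb{N})$ be metric directed multigraphs with $d_{\vec{\mathcal G}}(X_n,X)\to0$. Then the strongly connected components of $X_n$, listed in decreasing order of total length and viewed as metric directed multigraphs, converge (componentwise, for $d_{\vec{\mathcal G}}$) to those of $X$, listed in decreasing order of total length.
   Context: A metric directed multigraph (MDM) is $(V,E,r,\ell)$ with $V,E$ finite sets, $r=(r_1,r_2):E\to V\times V$ (tail, head), and $\ell:E\to(0,\infty)$; its total length is $\sum_e\ell(e)$. Strongly connected components are maximal sub-multigraphs in which any vertex can reach any other by a directed path; they are viewed as MDMs with the inherited edge lengths. $d_{\vec{\mathcal G}}(X,X')=\inf\sup_{e\in E}|\ell(e)-\ell'(g(e))|$, infimum over graph isomorphisms $(f,g)$ (bijections $f:V\to V'$, $g:E\to E'$ with $r'(g(e))=(f(r_1(e)),f(r_2(e)))$), and $+\infty$ if none exists. *)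

theory Defs
  imports "HOL-Analysis.Analysis"
begin

record ('v, 'e) mdm =
  verts :: "'v set"
  arcs  :: "'e set"
  tail  :: "'e \<Rightarrow> 'v"
  head  :: "'e \<Rightarrow> 'v"
  len   :: "'e \<Rightarrow> real"

definition is_mdm :: "('v, 'e) mdm \<Rightarrow> bool" where
  "is_mdm X \<longleftrightarrow> finite (verts X) \<and> finite (arcs X) \<and>
     (\<forall>e\<in>arcs X. tail X e \<in> verts X \<and> head X e \<in> verts X \<and> len X e > 0)"

definition total_length :: "('v, 'e) mdm \<Rightarrow> real" where
  "total_length X = (\<Sum>e\<in>arcs X. len X e)"

definition mdm_isos :: "('v, 'e) mdm \<Rightarrow> ('w, 'f) mdm \<Rightarrow> (('v \<Rightarrow> 'w) \<times> ('e \<Rightarrow> 'f)) set" where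
  "mdm_isos X Y = {(f, g). bij_betw f (verts X) (verts Y) \<and> bij_betw g (arcs X) (arcs Y) \<and>
      (\<forall>e\<in>arcs X. tail Y (g e) = f (tail X e) \<and> head Y (g e) = f (head X e))}"

text \<open>The distance d: inf over isomorphisms of sup over edges of the length discrepancy,
  +infinity if no isomorphism exists (the sup over an empty edge set is 0).\<close>
definition mdm_dist :: "('v, 'e) mdm \<Rightarrow> ('w, 'f) mdm \<Rightarrow> ereal" where
  "mdm_dist X Y = (if mdm_isos X Y = {} then \<infinity> else
     (INF fg\<in>mdm_isos X Y.
        Sup (insert 0 ((\<lambda>e. ereal \<bar>len X e - len Y (snd fg e)\<bar>) ` arcs X))))"

definition is_sub :: "('v, 'e) mdm \<Rightarrow> 'v set \<Rightarrow> 'e set \<Rightarrow> bool" where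
  "is_sub X V' E' \<longleftrightarrow> V' \<subseteq> verts X \<and> E' \<subseteq> arcs X \<and>
     (\<forall>e\<in>E'. tail X e \<in> V' \<and> head X e \<in> V')"

definition reaches :: "('v, 'e) mdm \<Rightarrow> 'e set \<Rightarrow> 'v \<Rightarrow> 'v \<Rightarrow> bool" where
  "reaches X E' u v \<longleftrightarrow> (u, v) \<in> {(tail X e, head X e) | e. e \<in> E'}\<^sup>*"

definition strongly_connected_sub :: "('v, 'e) mdm \<Rightarrow> 'v set \<Rightarrow> 'e set \<Rightarrow> bool" where
  "strongly_connected_sub X V' E' \<longleftrightarrow> is_sub X V' E' \<and> V' \<noteq> {} \<and>
     (\<forall>u\<in>V'. \<forall>v\<in>V'. reaches X E' u v)"

definition is_scc :: "('v, 'e) mdm \<Rightarrow> 'v set \<Rightarrow> 'e set \<Rightarrow> bool" where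
  "is_scc X V' E' \<longleftrightarrow> strongly_connected_sub X V' E' \<and>
     (\<forall>V'' E''. strongly_connected_sub X V'' E'' \<and> V' \<subseteq> V'' \<and> E' \<subseteq> E''
                 \<longrightarrow> V'' = V' \<and> E'' = E')"

definition sccs :: "('v, 'e) mdm \<Rightarrow> ('v, 'e) mdm set" where
  "sccs X = {X\<lparr>verts := V', arcs := E'\<rparr> | V' E'. is_scc X V' E'}"

definition sorted_sccs :: "('v, 'e) mdm \<Rightarrow> ('v, 'e) mdm list \<Rightarrow> bool" where
  "sorted_sccs X L \<longleftrightarrow> distinct L \<and> set L = sccs X \<and>
     sorted_wrt (\<lambda>A B. total_length A \<ge> total_length B) L"

end

theory Submission
  imports Defs
begin

lemma iso_parts:
  assumes "(f,g) \<in> mdm_isos A B"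
  shows "bij_betw f (verts A) (verts B)" "bij_betw g (arcs A) (arcs B)"
    "\<forall>e\<in>arcs A. tail B (g e) = f (tail A e) \<and> head B (g e) = f (head A e)"
  using assms by (auto simp: mdm_isos_def)

lemma iso_inv:
  assumes "is_mdm A" "(f,g) \<in> mdm_isos A B"
  shows "(inv_into (verts A) f, inv_into (arcs A) g) \<in> mdm_isos B A"
proof -
  note bf = iso_parts(1)[OF assms(2)] and bg = iso_parts(2)[OF assms(2)]
    and th = iso_parts(3)[OF assms(2)]
  have "tail A (inv_into (arcs A) g e) = inv_into (verts A) f (tail B e) \<and>
        head A (inv_into (arcs A) g e) = inv_into (verts A) f (head B e)" if "e \<in> arcs B" for e
  proof -
    let ?e = "inv_into (arcs A) g e"
    have e1: "?e \<in> arcs A" using bg that by (metis bij_betw_imp_surj_on inv_into_into)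
    have e2: "g ?e = e" using bg that by (meson bij_betw_inv_into_right)
    have "tail B e = f (tail A ?e)" "head B e = f (head A ?e)" using th e1 e2 by metis+
    moreover have "tail A ?e \<in> verts A" "head A ?e \<in> verts A" using assms(1) e1 by (auto simp: is_mdm_def)
    ultimately show ?thesis using bf by (simp add: bij_betw_inv_into_left)
  qed
  then show ?thesis using bf bg by (auto simp: mdm_isos_def bij_betw_inv_into)
qed

lemma reaches_iso:
  assumes "(f,g) \<in> mdm_isos A B" "E \<subseteq> arcs A" "reaches A E u v"
  shows "reaches B (g ` E) (f u) (f v)"
proof -
  note th = iso_parts(3)[OF assms(1)]
  have "(u, v) \<in> {(tail A e, head A e) | e. e \<in> E}\<^sup>*" using assms(3) by (simp add: reaches_def)
  then have "(f u, f v) \<in> {(tail B e, head B e) | e. e \<in> g ` E}\<^sup>*"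
  proof (induction rule: rtrancl_induct)
    case base then show ?case by simp
  next
    case (step y z)
    then obtain e where e: "e \<in> E" "y = tail A e" "z = head A e" by auto
    then have "(f y, f z) \<in> {(tail B e, head B e) | e. e \<in> g ` E}" using th assms(2) by force
    with step.IH show ?case by (rule rtrancl_into_rtrancl)
  qed
  then show ?thesis by (simp add: reaches_def)
qed

lemma sc_iso:
  assumes "(f,g) \<in> mdm_isos A B" "strongly_connected_sub A V E"
  shows "strongly_connected_sub B (f ` V) (g ` E)"
proof -
  note bf = iso_parts(1)[OF assms(1)] and bg = iso_parts(2)[OF assms(1)]
    and th = iso_parts(3)[OF assms(1)]
  from assms(2) have sub: "V \<subseteq> verts A" "E \<subseteq> arcs A" "\<forall>e\<in>E. tail A e \<in> V \<and> head A e \<in> V"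
    "V \<noteq> {}" "\<forall>u\<in>V. \<forall>v\<in>V. reaches A E u v"
    by (auto simp: strongly_connected_sub_def is_sub_def)
  have "f ` V \<subseteq> verts B" using sub(1) bf by (auto simp: bij_betw_def)
  moreover have "g ` E \<subseteq> arcs B" using sub(2) bg by (auto simp: bij_betw_def)
  moreover have "\<forall>e\<in>g ` E. tail B e \<in> f ` V \<and> head B e \<in> f ` V" using sub th by force
  ultimately have "is_sub B (f`V) (g`E)" unfolding is_sub_def by blast
  moreover have "\<forall>u\<in>f`V. \<forall>v\<in>f`V. reaches B (g`E) u v"
    using reaches_iso[OF assms(1) sub(2)] sub(5) by blast
  ultimately show ?thesis using sub(4) by (simp add: strongly_connected_sub_def)
qed

lemma scc_iso:
  assumes "is_mdm A" "(f,g) \<in> mdm_isos A B" "is_scc A V E"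
  shows "is_scc B (f ` V) (g ` E)"
proof -
  define f' where "f' = inv_into (verts A) f"
  define g' where "g' = inv_into (arcs A) g"
  have inv: "(f', g') \<in> mdm_isos B A" unfolding f'_def g'_def by (rule iso_inv[OF assms(1,2)])
  note bf = iso_parts(1)[OF assms(2)] and bg = iso_parts(2)[OF assms(2)]
  have sc: "strongly_connected_sub A V E" and mx: "\<And>V'' E''. strongly_connected_sub A V'' E'' \<Longrightarrow> V \<subseteq> V'' \<Longrightarrow> E \<subseteq> E'' \<Longrightarrow> V'' = V \<and> E'' = E"
    using assms(3) by (auto simp: is_scc_def)
  have VA: "V \<subseteq> verts A" and EA: "E \<subseteq> arcs A" using sc by (auto simp: strongly_connected_sub_def is_sub_def)
  show ?thesis unfolding is_scc_def
  proof (intro conjI allI impI)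
    show "strongly_connected_sub B (f ` V) (g ` E)" by (rule sc_iso[OF assms(2) sc])
    fix V'' E'' assume h: "strongly_connected_sub B V'' E'' \<and> f ` V \<subseteq> V'' \<and> g ` E \<subseteq> E''"
    have VB: "V'' \<subseteq> verts B" and EB: "E'' \<subseteq> arcs B" using h by (auto simp: strongly_connected_sub_def is_sub_def)
    have sc2: "strongly_connected_sub A (f' ` V'') (g' ` E'')" using sc_iso[OF inv] h by blast
    have "V \<subseteq> f' ` V''"
    proof
      fix x assume "x \<in> V"
      then have "x = f' (f x)" "f x \<in> V''" using VA bf h unfolding f'_def by (auto simp: bij_betw_inv_into_left)
      then show "x \<in> f' ` V''" by blast
    qed
    moreover have "E \<subseteq> g' ` E''"
    proof
      fix x assume "x \<in> E"
      then have "x = g' (g x)" "g x \<in> E''" using EA bg h unfolding g'_def by (auto simp: bij_betw_inv_into_left)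
      then show "x \<in> g' ` E''" by blast
    qed
    ultimately have eqs: "f' ` V'' = V" "g' ` E'' = E" using mx[OF sc2] by auto
    have "\<forall>y\<in>V''. f (f' y) = y" using VB bf unfolding f'_def by (meson bij_betw_inv_into_right subsetD)
    then have "f ` f' ` V'' = V''" by (force simp: image_image)
    moreover have "\<forall>y\<in>E''. g (g' y) = y" using EB bg unfolding g'_def by (meson bij_betw_inv_into_right subsetD)
    then have "g ` g' ` E'' = E''" by (force simp: image_image)
    ultimately show "V'' = f ` V" "E'' = g ` E" using eqs by simp_all
  qed
qed

definition hmap :: "('v,'e) mdm \<Rightarrow> ('w \<Rightarrow> 'v) \<Rightarrow> ('f \<Rightarrow> 'e) \<Rightarrow> ('w,'f) mdm \<Rightarrow> ('v,'e) mdm" where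
  "hmap X f g D = X\<lparr>verts := f ` verts D, arcs := g ` arcs D\<rparr>"

lemma sccs_mem: "D \<in> sccs Y \<longleftrightarrow> (\<exists>V E. D = Y\<lparr>verts := V, arcs := E\<rparr> \<and> is_scc Y V E)"
  by (auto simp: sccs_def)

lemma scc_sub: "is_scc Y V E \<Longrightarrow> V \<subseteq> verts Y \<and> E \<subseteq> arcs Y"
  by (auto simp: is_scc_def strongly_connected_sub_def is_sub_def)

lemma hmap_in:
  assumes "is_mdm Y" "(f,g) \<in> mdm_isos Y X" "D \<in> sccs Y"
  shows "hmap X f g D \<in> sccs X"
proof -
  obtain V E where D: "D = Y\<lparr>verts := V, arcs := E\<rparr>" "is_scc Y V E" using assms(3) sccs_mem by blast
  have "is_scc X (f ` V) (g ` E)" by (rule scc_iso[OF assms(1,2) D(2)])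
  then show ?thesis using D(1) by (auto simp: hmap_def sccs_def)
qed

lemma hmap_inj:
  assumes "(f,g) \<in> mdm_isos Y X"
  shows "inj_on (hmap X f g) (sccs Y)"
proof (rule inj_onI)
  note bf = iso_parts(1)[OF assms] and bg = iso_parts(2)[OF assms]
  fix D1 D2 assume d1: "D1 \<in> sccs Y" and d2: "D2 \<in> sccs Y" and eq: "hmap X f g D1 = hmap X f g D2"
  obtain V1 E1 where D1: "D1 = Y\<lparr>verts := V1, arcs := E1\<rparr>" "is_scc Y V1 E1" using d1 sccs_mem by blast
  obtain V2 E2 where D2: "D2 = Y\<lparr>verts := V2, arcs := E2\<rparr>" "is_scc Y V2 E2" using d2 sccs_mem by blast
  have s: "V1 \<subseteq> verts Y" "E1 \<subseteq> arcs Y" "V2 \<subseteq> verts Y" "E2 \<subseteq> arcs Y" using scc_sub[OF D1(2)] scc_sub[OF D2(2)] by auto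
  have "verts (hmap X f g D1) = verts (hmap X f g D2)" "arcs (hmap X f g D1) = arcs (hmap X f g D2)"
    using eq by simp_all
  then have "f ` V1 = f ` V2" "g ` E1 = g ` E2" using D1(1) D2(1) by (simp_all add: hmap_def)
  then have "V1 = V2" "E1 = E2" using s bf bg by (auto simp: bij_betw_def inj_on_image_eq_iff)
  then show "D1 = D2" using D1(1) D2(1) by simp
qed

lemma hmap_surj:
  assumes "is_mdm Y" "is_mdm X" "(f,g) \<in> mdm_isos Y X"
  shows "hmap X f g ` sccs Y = sccs X"
proof
  show "hmap X f g ` sccs Y \<subseteq> sccs X" using hmap_in[OF assms(1,3)] by blast
  show "sccs X \<subseteq> hmap X f g ` sccs Y"
  proof
    fix C assume "C \<in> sccs X"
    then obtain V E where C: "C = X\<lparr>verts := V, arcs := E\<rparr>" "is_scc X V E" using sccs_mem by blast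
    define f' where "f' = inv_into (verts Y) f"
    define g' where "g' = inv_into (arcs Y) g"
    have inv: "(f', g') \<in> mdm_isos X Y" unfolding f'_def g'_def by (rule iso_inv[OF assms(1,3)])
    note bf = iso_parts(1)[OF assms(3)] and bg = iso_parts(2)[OF assms(3)]
    have sc: "is_scc Y (f' ` V) (g' ` E)" by (rule scc_iso[OF assms(2) inv C(2)])
    have s: "V \<subseteq> verts X" "E \<subseteq> arcs X" using scc_sub[OF C(2)] by auto
    have "\<forall>y\<in>V. f (f' y) = y" using s bf unfolding f'_def by (meson bij_betw_inv_into_right subsetD)
    then have fv: "f ` f' ` V = V" by (force simp: image_image)
    have "\<forall>y\<in>E. g (g' y) = y" using s bg unfolding g'_def by (meson bij_betw_inv_into_right subsetD)
    then have ge: "g ` g' ` E = E" by (force simp: image_image)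
    have "Y\<lparr>verts := f' ` V, arcs := g' ` E\<rparr> \<in> sccs Y" using sc by (auto simp: sccs_def)
    moreover have "hmap X f g (Y\<lparr>verts := f' ` V, arcs := g' ` E\<rparr>) = C" using C(1) fv ge by (simp add: hmap_def)
    ultimately show "C \<in> hmap X f g ` sccs Y" by force
  qed
qed

lemma tl_close:
  fixes \<epsilon> :: real
  assumes "is_mdm Y" "(f,g) \<in> mdm_isos Y X" "\<forall>e\<in>arcs Y. \<bar>len Y e - len X (g e)\<bar> \<le> \<epsilon>" "\<epsilon> \<ge> 0"
    "D \<in> sccs Y"
  shows "\<bar>total_length D - total_length (hmap X f g D)\<bar> \<le> card (arcs Y) * \<epsilon>"
proof -
  obtain V E where D: "D = Y\<lparr>verts := V, arcs := E\<rparr>" "is_scc Y V E" using assms(5) sccs_mem by blast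
  note bg = iso_parts(2)[OF assms(2)]
  have EY: "E \<subseteq> arcs Y" using scc_sub[OF D(2)] by auto
  have fin: "finite (arcs Y)" using assms(1) by (simp add: is_mdm_def)
  then have finE: "finite E" using EY finite_subset by blast
  have injg: "inj_on g E" using bg EY by (meson bij_betw_def inj_on_subset)
  have t1: "total_length D = (\<Sum>e\<in>E. len Y e)" using D(1) by (simp add: total_length_def)
  have t2: "total_length (hmap X f g D) = (\<Sum>e\<in>E. len X (g e))"
    using D(1) injg by (simp add: total_length_def hmap_def sum.reindex)
  have "\<bar>(\<Sum>e\<in>E. len Y e) - (\<Sum>e\<in>E. len X (g e))\<bar> = \<bar>\<Sum>e\<in>E. len Y e - len X (g e)\<bar>"
    by (simp add: sum_subtractf)
  also have "\<dots> \<le> (\<Sum>e\<in>E. \<bar>len Y e - len X (g e)\<bar>)" by (rule sum_abs)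
  also have "\<dots> \<le> (\<Sum>e\<in>E. \<epsilon>)" using assms(3) EY by (intro sum_mono) auto
  also have "\<dots> = card E * \<epsilon>" by simp
  also have "\<dots> \<le> card (arcs Y) * \<epsilon>" using card_mono[OF fin EY] assms(4) by (simp add: mult_right_mono)
  finally show ?thesis using t1 t2 by simp
qed

lemma dist_close:
  fixes \<epsilon> :: real
  assumes "(f,g) \<in> mdm_isos Y X" "\<forall>e\<in>arcs Y. \<bar>len Y e - len X (g e)\<bar> \<le> \<epsilon>" "\<epsilon> \<ge> 0"
    "D \<in> sccs Y"
  shows "mdm_dist D (hmap X f g D) \<le> ereal \<epsilon>"
proof -
  obtain V E where D: "D = Y\<lparr>verts := V, arcs := E\<rparr>" "is_scc Y V E" using assms(4) sccs_mem by blast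
  note bf = iso_parts(1)[OF assms(1)] and bg = iso_parts(2)[OF assms(1)] and th = iso_parts(3)[OF assms(1)]
  have s: "V \<subseteq> verts Y" "E \<subseteq> arcs Y" using scc_sub[OF D(2)] by auto
  have "inj_on f V" using bf s by (meson bij_betw_def inj_on_subset)
  moreover have "inj_on g E" using bg s by (meson bij_betw_def inj_on_subset)
  ultimately have iso: "(f,g) \<in> mdm_isos D (hmap X f g D)"
    using D(1) th s by (auto simp: mdm_isos_def hmap_def inj_on_imp_bij_betw)
  then have "mdm_dist D (hmap X f g D) \<le> Sup (insert 0 ((\<lambda>e. ereal \<bar>len D e - len (hmap X f g D) (g e)\<bar>) ` arcs D))"
    unfolding mdm_dist_def by (auto intro!: INF_lower2[OF iso])
  also have "\<dots> \<le> ereal \<epsilon>"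
    using D(1) s assms(2,3) by (auto simp: hmap_def intro!: Sup_least)
  finally show ?thesis .
qed

lemma main_det:
  fixes X :: "('v,'e) mdm" and Y :: "('w,'f) mdm" and \<epsilon> \<gamma> :: real
  assumes mX: "is_mdm X" and mY: "is_mdm Y" and inj: "inj_on total_length (sccs X)"
    and sL: "sorted_sccs X L" and sLY: "sorted_sccs Y LY" and iso: "(f,g) \<in> mdm_isos Y X"
    and cl: "\<forall>e\<in>arcs Y. \<bar>len Y e - len X (g e)\<bar> \<le> \<epsilon>" and e0: "\<epsilon> \<ge> 0"
    and gap: "\<forall>A\<in>sccs X. \<forall>B\<in>sccs X. A \<noteq> B \<longrightarrow> \<gamma> \<le> \<bar>total_length A - total_length B\<bar>"
    and small: "2 * (card (arcs Y) * \<epsilon>) < \<gamma>"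
  shows "map (hmap X f g) LY = L"
proof -
  let ?h = "hmap X f g"
  let ?M = "card (arcs Y) * \<epsilon>"
  let ?t = "total_length :: ('v,'e) mdm \<Rightarrow> real"
  let ?s = "total_length :: ('w,'f) mdm \<Rightarrow> real"
  have setLY: "set LY = sccs Y" "distinct LY" "sorted_wrt (\<lambda>A B. ?s A \<ge> ?s B) LY"
    using sLY by (simp_all add: sorted_sccs_def)
  have setL: "set L = sccs X" "distinct L" "sorted_wrt (\<lambda>A B. ?t A \<ge> ?t B) L"
    using sL by (simp_all add: sorted_sccs_def)
  have hin: "inj_on ?h (sccs Y)" by (rule hmap_inj[OF iso])
  have hs: "?h ` sccs Y = sccs X" by (rule hmap_surj[OF mY mX iso])
  have close: "\<And>D. D \<in> sccs Y \<Longrightarrow> \<bar>?s D - ?t (?h D)\<bar> \<le> ?M" using tl_close[OF mY iso cl e0] by blast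
  have d1: "distinct (map ?h LY)" using setLY hin by (simp add: distinct_map)
  have s1: "set (map ?h LY) = sccs X" using setLY hs by simp
  have o1: "sorted_wrt (\<lambda>A B. ?t A \<ge> ?t B) (map ?h LY)"
    unfolding sorted_wrt_map
  proof (rule sorted_wrt_mono_rel[OF _ setLY(3)])
    fix x y assume x: "x \<in> set LY" and y: "y \<in> set LY" and le: "?s x \<ge> ?s y"
    show "?t (?h x) \<ge> ?t (?h y)"
    proof (cases "x = y")
      case True then show ?thesis by simp
    next
      case False
      then have "?h x \<noteq> ?h y" using hin x y setLY(1) by (metis inj_onD)
      moreover have "?h x \<in> sccs X" "?h y \<in> sccs X" using x y setLY(1) hs by auto
      ultimately have "\<gamma> \<le> \<bar>?t (?h x) - ?t (?h y)\<bar>" using gap by blast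
      moreover have "\<bar>?s x - ?t (?h x)\<bar> \<le> ?M" "\<bar>?s y - ?t (?h y)\<bar> \<le> ?M" using close x y setLY(1) by auto
      ultimately show ?thesis using le small by (smt (verit))
    qed
  qed
  have injm: "inj_on (\<lambda>A. - ?t A) (set (map ?h LY) \<union> set L)"
    using inj s1 setL(1) by (auto simp: inj_on_def)
  show ?thesis
  proof (rule map_sorted_distinct_set_unique[OF injm])
    show "sorted (map (\<lambda>A. - ?t A) (map ?h LY))" using o1 by (simp add: sorted_wrt_map)
    show "sorted (map (\<lambda>A. - ?t A) L)" using setL(3) by (simp add: sorted_wrt_map)
    show "distinct (map (\<lambda>A. - ?t A) (map ?h LY))" using injm d1 by (simp add: distinct_map inj_on_Un del: map_map)
    show "distinct (map (\<lambda>A. - ?t A) L)" using injm setL(2) by (simp add: distinct_map inj_on_Un)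
    show "set (map ?h LY) = set L" using s1 setL(1) by simp
  qed
qed

lemma mdm_dist_nonneg: "0 \<le> mdm_dist A B"
  unfolding mdm_dist_def by (auto intro!: INF_greatest Sup_upper)

theorem proposition5p3:
  fixes X :: "('v, 'e) mdm" and Xs :: "nat \<Rightarrow> ('w, 'f) mdm"
    and L :: "('v, 'e) mdm list" and Ls :: "nat \<Rightarrow> ('w, 'f) mdm list"
  assumes "is_mdm X"
    and "\<And>n. is_mdm (Xs n)"
    and "inj_on total_length (sccs X)"
    and "(\<lambda>n. mdm_dist (Xs n) X) \<longlonglongrightarrow> 0"
    and "sorted_sccs X L"
    and "\<And>n. sorted_sccs (Xs n) (Ls n)"
  shows "(\<forall>\<^sub>F n in sequentially. length (Ls n) = length L) \<and>
         (\<forall>i < length L. (\<lambda>n. mdm_dist (Ls n ! i) (L ! i)) \<longlonglongrightarrow> 0)"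
proof -
  let ?t = "total_length :: ('v,'e) mdm \<Rightarrow> real"
  have finS: "finite (sccs X)" using assms(5) by (metis List.finite_set sorted_sccs_def)
  define G where "G = {\<bar>?t A - ?t B\<bar> | A B. A \<in> sccs X \<and> B \<in> sccs X \<and> A \<noteq> B}"
  define \<gamma> where "\<gamma> = Min (insert 1 G)"
  have "G \<subseteq> (\<lambda>(A,B). \<bar>?t A - ?t B\<bar>) ` (sccs X \<times> sccs X)" unfolding G_def by auto
  then have finG: "finite G" using finS by (meson finite_SigmaI finite_imageI finite_subset)
  have Gpos: "\<forall>x\<in>G. x > 0" unfolding G_def using inj_onD[OF assms(3)] by fastforce
  have gpos: "\<gamma> > 0" unfolding \<gamma>_def using finG Gpos by (subst Min_gr_iff) auto
  have gap: "\<forall>A\<in>sccs X. \<forall>B\<in>sccs X. A \<noteq> B \<longrightarrow> \<gamma> \<le> \<bar>?t A - ?t B\<bar>"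
    unfolding \<gamma>_def proof (intro ballI impI Min_le)
    fix A B assume "A \<in> sccs X" "B \<in> sccs X" "A \<noteq> B"
    then show "\<bar>?t A - ?t B\<bar> \<in> insert 1 G" unfolding G_def by blast
  qed (use finG in simp)
  define M where "M = card (arcs X)"
  have key: "\<forall>\<^sub>F n in sequentially. length (Ls n) = length L \<and>
      (\<forall>i < length L. mdm_dist (Ls n ! i) (L ! i) \<le> ereal e')" if e'0: "e' > 0" for e' :: real
  proof -
    define \<epsilon> where "\<epsilon> = min e' (\<gamma> / (4 * (real M + 1)))"
    have e0: "\<epsilon> > 0" unfolding \<epsilon>_def using e'0 gpos by simp
    have small: "2 * (real M * \<epsilon>) < \<gamma>"
    proof -
      have "\<epsilon> \<le> \<gamma> / (4 * (real M + 1))" unfolding \<epsilon>_def by simp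
      then have "\<epsilon> * (4 * (real M + 1)) \<le> \<gamma>" by (simp add: pos_le_divide_eq)
      moreover have "\<epsilon> * (4 * (real M + 1)) = 4 * (real M * \<epsilon>) + 4 * \<epsilon>" by (simp add: algebra_simps)
      moreover have "0 \<le> real M * \<epsilon>" using e0 by simp
      ultimately show ?thesis using e0 by linarith
    qed
    have ev: "\<forall>\<^sub>F n in sequentially. mdm_dist (Xs n) X < ereal \<epsilon>"
      using order_tendstoD(2)[OF assms(4)] e0 by simp
    show ?thesis
    proof (rule eventually_mono[OF ev])
      fix n assume dn: "mdm_dist (Xs n) X < ereal \<epsilon>"
      let ?Y = "Xs n"
      have ne: "mdm_isos ?Y X \<noteq> {}"
      proof
        assume "mdm_isos ?Y X = {}"
        then have "mdm_dist ?Y X = \<infinity>" by (simp add: mdm_dist_def)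
        with dn show False by simp
      qed
      then have "(INF fg\<in>mdm_isos ?Y X. Sup (insert 0 ((\<lambda>e. ereal \<bar>len ?Y e - len X (snd fg e)\<bar>) ` arcs ?Y))) < ereal \<epsilon>"
        using dn unfolding mdm_dist_def by simp
      then obtain fg where fg: "fg \<in> mdm_isos ?Y X"
        and sl: "Sup (insert 0 ((\<lambda>e. ereal \<bar>len ?Y e - len X (snd fg e)\<bar>) ` arcs ?Y)) < ereal \<epsilon>"
        by (auto simp: INF_less_iff)
      obtain f g where fgd: "fg = (f, g)" by (cases fg)
      have iso: "(f,g) \<in> mdm_isos ?Y X" using fg fgd by simp
      have cl: "\<forall>e\<in>arcs ?Y. \<bar>len ?Y e - len X (g e)\<bar> \<le> \<epsilon>"
      proof
        fix e assume eA: "e \<in> arcs ?Y"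
        have "ereal \<bar>len ?Y e - len X (g e)\<bar> \<le> Sup (insert 0 ((\<lambda>e. ereal \<bar>len ?Y e - len X (snd fg e)\<bar>) ` arcs ?Y))"
          unfolding fgd snd_conv by (rule Sup_upper, rule insertI2, rule image_eqI[where x=e], rule refl, rule eA)
        then have "ereal \<bar>len ?Y e - len X (g e)\<bar> < ereal \<epsilon>" using sl by (rule order_le_less_trans)
        then show "\<bar>len ?Y e - len X (g e)\<bar> \<le> \<epsilon>" by simp
      qed
      have cM: "card (arcs ?Y) = M" unfolding M_def using iso_parts(2)[OF iso] by (rule bij_betw_same_card)
      have mp: "map (hmap X f g) (Ls n) = L"
        using main_det[OF assms(1) assms(2) assms(3) assms(5) assms(6) iso cl _ gap] e0 small cM by simp
      have setLY: "set (Ls n) = sccs ?Y" using assms(6) by (simp add: sorted_sccs_def)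
      have "length (Ls n) = length L" using mp by (metis length_map)
      moreover have "mdm_dist (Ls n ! i) (L ! i) \<le> ereal e'" if i: "i < length L" for i
      proof -
        have il: "i < length (Ls n)" using i mp by (metis length_map)
        then have "L ! i = hmap X f g (Ls n ! i)" using mp by (metis nth_map)
        moreover have "Ls n ! i \<in> sccs ?Y" using il setLY by (metis nth_mem)
        ultimately have "mdm_dist (Ls n ! i) (L ! i) \<le> ereal \<epsilon>" using dist_close[OF iso cl] e0 by simp
        also have "\<dots> \<le> ereal e'" unfolding \<epsilon>_def by simp
        finally show ?thesis .
      qed
      ultimately show "length (Ls n) = length L \<and> (\<forall>i < length L. mdm_dist (Ls n ! i) (L ! i) \<le> ereal e')"
        by blast
    qed
  qed
  show ?thesis
  proof
    show "\<forall>\<^sub>F n in sequentially. length (Ls n) = length L"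
      using key[of 1] by (auto elim: eventually_mono)
    show "\<forall>i < length L. (\<lambda>n. mdm_dist (Ls n ! i) (L ! i)) \<longlonglongrightarrow> 0"
    proof (intro allI impI order_tendstoI)
      fix i and a :: ereal assume i: "i < length L"
      { assume "a < 0"
        then show "\<forall>\<^sub>F n in sequentially. a < mdm_dist (Ls n ! i) (L ! i)"
          using mdm_dist_nonneg order_less_le_trans by (intro always_eventually allI) blast }
      { assume "0 < a"
        then obtain z where z: "0 < ereal z" "ereal z < a" using ereal_dense2 by blast
        then have "\<forall>\<^sub>F n in sequentially. mdm_dist (Ls n ! i) (L ! i) \<le> ereal z" using key[of z] i
          by (auto elim: eventually_mono)
        then show "\<forall>\<^sub>F n in sequentially. mdm_dist (Ls n ! i) (L ! i) < a"
          using z(2) by (auto elim: eventually_mono) }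
    qed
  qed
qed


end
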